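(* Let $G$ be a finite simple graph, let $r \ge 1$, and let $H_1,\dots,H_r$ be Hamilton cycles in $G$ (viewed as spanning subgraphs on $V(G)$). Let $H = H_1\cup\dots\cup H_r$ be the spanning subgraph with edge set $E(H_1)\cup\dots\cup E(H_r)$, and let $G-H$ be the spanning subgraph of $G$ with edge set $E(G)\setminus E(H)$. Then $\widetilde{\alpha}(G-H) + 1 \le (r+1)(\widetilde{\alpha}(G)+1)$.
   Context: For disjoint vertex sets $S,T$, $E(S,T)$ is the set of edges with one end in $S$ and one in $T$. An $(s,t)$-bipartite-hole in a graph $F$ consists of two disjoint sets of vertices $S,T$ with $|S|=s$, $|T|=t$ and $E(S,T)=\emptyset$. The bipartite-hole-number $\widetilde{\alpha}(F)$ is the least integer $r'$ which can be written as $r'=s+t-1$ for some positive integers $s,t$ such that $F$ contains no $(s,t)$-bipartite-hole. *)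

theory Defs
  imports Main
begin

definition simple_graph :: "'a set \<Rightarrow> 'a set set \<Rightarrow> bool" where
  "simple_graph V E \<longleftrightarrow> finite V \<and> (\<forall>e\<in>E. e \<subseteq> V \<and> card e = 2)"

definition cycle_edges :: "'a list \<Rightarrow> 'a set set" where
  "cycle_edges xs = {{xs ! i, xs ! (Suc i mod length xs)} | i. i < length xs}"

definition is_ham_cycle :: "'a set \<Rightarrow> 'a set set \<Rightarrow> 'a list \<Rightarrow> bool" where
  "is_ham_cycle V E xs \<longleftrightarrow> distinct xs \<and> set xs = V \<and> length xs \<ge> 3 \<and> cycle_edges xs \<subseteq> E"

definition has_bip_hole :: "'a set \<Rightarrow> 'a set set \<Rightarrow> nat \<Rightarrow> nat \<Rightarrow> bool" where
  "has_bip_hole V E s t \<longleftrightarrow> (\<exists>S T. S \<subseteq> V \<and> T \<subseteq> V \<and> S \<inter> T = {} \<and> card S = s \<and> card T = t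
      \<and> (\<forall>x\<in>S. \<forall>y\<in>T. {x, y} \<notin> E))"

definition bhn :: "'a set \<Rightarrow> 'a set set \<Rightarrow> nat" where
  "bhn V E = (LEAST r. \<exists>s t. 0 < s \<and> 0 < t \<and> r = s + t - 1 \<and> \<not> has_bip_hole V E s t)"

end

theory Submission
  imports Defs
begin

lemma suc_mod_inj:
  assumes "j < n" "k < n" "Suc j mod n = Suc k mod n" shows "j = k"
  using assms by (auto simp: mod_Suc split: if_splits)

definition nbr :: "'a list \<Rightarrow> 'a \<Rightarrow> 'a set" where
  "nbr xs x = (\<lambda>j. xs!(Suc j mod length xs)) ` {j. j<length xs \<and> xs!j = x}
     \<union> (\<lambda>j. xs!j) ` {j. j<length xs \<and> xs!(Suc j mod length xs) = x}"

lemma nbr_mem: assumes "{x,y} \<in> cycle_edges xs" shows "y \<in> nbr xs x"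
proof -
  obtain i where i: "i < length xs" "{x,y} = {xs!i, xs!(Suc i mod length xs)}"
    using assms unfolding cycle_edges_def by blast
  then have "(x = xs!i \<and> y = xs!(Suc i mod length xs)) \<or> (x = xs!(Suc i mod length xs) \<and> y = xs!i)"
    by (metis doubleton_eq_iff)
  then show ?thesis unfolding nbr_def using i(1) by auto
qed

lemma nbr_card: assumes "distinct xs" shows "finite (nbr xs x) \<and> card (nbr xs x) \<le> 2"
proof -
  let ?n = "length xs"
  let ?A = "{j. j<?n \<and> xs!j = x}"
  let ?B = "{j. j<?n \<and> xs!(Suc j mod ?n) = x}"
  have fA: "finite ?A" "finite ?B" by auto
  have cA: "card ?A \<le> 1"
    using card_le_Suc0_iff_eq[OF fA(1)] assms by (auto simp: nth_eq_iff_index_eq)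
  have cB: "card ?B \<le> 1"
  proof -
    have "\<forall>a\<in>?B. \<forall>b\<in>?B. a = b"
    proof (intro ballI)
      fix a b assume a: "a \<in> ?B" and b: "b \<in> ?B"
      have "?n > 0" using a by auto
      then have "Suc a mod ?n < ?n" "Suc b mod ?n < ?n" by auto
      then have "Suc a mod ?n = Suc b mod ?n" using a b assms by (auto simp: nth_eq_iff_index_eq)
      then show "a = b" using suc_mod_inj a b by auto
    qed
    then show ?thesis using card_le_Suc0_iff_eq[OF fA(2)] by auto
  qed
  have "card (nbr xs x) \<le> card ((\<lambda>j. xs!(Suc j mod ?n)) ` ?A) + card ((\<lambda>j. xs!j) ` ?B)"
    unfolding nbr_def by (rule card_Un_le)
  also have "\<dots> \<le> card ?A + card ?B" by (intro add_mono card_image_le fA)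
  finally show ?thesis using cA cB unfolding nbr_def by auto
qed

lemma hole_sym: "has_bip_hole V E s t \<Longrightarrow> has_bip_hole V E t s"
  unfolding has_bip_hole_def by (metis inf_commute insert_commute)

lemma key:
  assumes nh: "\<not> has_bip_hole V E s t" and st: "0 < s" "0 < t"
    and N: "\<forall>x. finite (N x) \<and> card (N x) \<le> d"
    and H: "\<forall>x y. {x,y} \<in> H \<longrightarrow> y \<in> N x"
  shows "\<not> has_bip_hole V (E - H) s (t + d*s)"
proof
  assume "has_bip_hole V (E - H) s (t + d*s)"
  then obtain S T where S: "S \<subseteq> V" "T \<subseteq> V" "S \<inter> T = {}" "card S = s" "card T = t + d*s"
    and no: "\<forall>x\<in>S. \<forall>y\<in>T. {x, y} \<notin> E - H"
    unfolding has_bip_hole_def by blast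
  have fS: "finite S" using S(4) st by (metis card.infinite less_not_refl2)
  have fT: "finite T" using S(5) st by (metis card.infinite add_gr_0 less_not_refl2)
  let ?M = "\<Union>x\<in>S. N x"
  have fM: "finite ?M" using fS N by auto
  have "card ?M \<le> (\<Sum>x\<in>S. card (N x))" by (rule card_UN_le[OF fS])
  also have "\<dots> \<le> (\<Sum>x\<in>S. d)" using N by (intro sum_mono) auto
  also have "\<dots> = d * s" using S(4) by simp
  finally have cM: "card ?M \<le> d*s" .
  have "card T - card ?M \<le> card (T - ?M)" by (rule diff_card_le_card_Diff[OF fM])
  then have "t \<le> card (T - ?M)" using cM S(5) by linarith
  then obtain T2 where T2: "T2 \<subseteq> T - ?M" "card T2 = t" by (meson obtain_subset_with_card_n)
  have "has_bip_hole V E s t"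
    unfolding has_bip_hole_def
  proof (intro exI conjI)
    show "S \<subseteq> V" "T2 \<subseteq> V" "S \<inter> T2 = {}" "card S = s" "card T2 = t"
      using S T2 by auto
    show "\<forall>x\<in>S. \<forall>y\<in>T2. {x, y} \<notin> E"
    proof (intro ballI)
      fix x y assume x: "x \<in> S" and y: "y \<in> T2"
      then have "y \<notin> N x" "y \<in> T" using T2 by auto
      then show "{x,y} \<notin> E" using no x H by blast
    qed
  qed
  then show False using nh by simp
qed

theorem lemma10:
  fixes V :: "'a set" and E :: "'a set set" and r :: nat and C :: "nat \<Rightarrow> 'a list"
  assumes "simple_graph V E"
    and "r \<ge> 1"
    and "\<forall>i<r. is_ham_cycle V E (C i)"
  shows "bhn V (E - (\<Union>i<r. cycle_edges (C i))) + 1 \<le> (r + 1) * (bhn V E + 1)"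
proof -
  have fV: "finite V" using assms(1) unfolding simple_graph_def by auto
  let ?P = "\<lambda>E r. \<exists>s t. 0 < s \<and> 0 < t \<and> r = s + t - 1 \<and> \<not> has_bip_hole V E s t"
  have "\<not> has_bip_hole V E (card V + 1) 1"
    unfolding has_bip_hole_def
  proof (intro notI, elim exE conjE)
    fix S T assume "S \<subseteq> V"
    assume "card S = card V + 1"
    have "card S \<le> card V" by (rule card_mono[OF fV]) fact
    then show False using \<open>card S = card V + 1\<close> by simp
  qed
  then have "?P E (card V + 1 + 1 - 1)" by (intro exI[of _ "card V + 1"] exI[of _ 1]) simp
  then have "?P E (bhn V E)" unfolding bhn_def by (rule LeastI)
  then obtain s t where st: "0 < s" "0 < t" "bhn V E = s + t - 1" "\<not> has_bip_hole V E s t"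
    by blast
  let ?H = "\<Union>i<r. cycle_edges (C i)"
  define N where "N x = (\<Union>i<r. nbr (C i) x)" for x
  have Nc: "\<forall>x. finite (N x) \<and> card (N x) \<le> 2*r"
  proof
    fix x
    have d: "\<forall>i<r. finite (nbr (C i) x) \<and> card (nbr (C i) x) \<le> 2"
    proof (intro allI impI)
      fix i assume "i < r"
      then have "distinct (C i)" using assms(3) unfolding is_ham_cycle_def by simp
      then show "finite (nbr (C i) x) \<and> card (nbr (C i) x) \<le> 2" by (rule nbr_card)
    qed
    have "card (N x) \<le> (\<Sum>i<r. card (nbr (C i) x))" unfolding N_def by (rule card_UN_le) simp
    also have "\<dots> \<le> (\<Sum>i<r. 2)" using d by (intro sum_mono) auto
    finally have "card (N x) \<le> 2*r" by simp
    moreover have "finite (N x)" unfolding N_def using d by simp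
    ultimately show "finite (N x) \<and> card (N x) \<le> 2*r" by simp
  qed
  have NH: "\<forall>x y. {x,y} \<in> ?H \<longrightarrow> y \<in> N x"
  proof (intro allI impI)
    fix x y assume "{x,y} \<in> ?H"
    then obtain i where i: "i < r" "{x,y} \<in> cycle_edges (C i)" by blast
    then have "y \<in> nbr (C i) x" by (rule_tac nbr_mem)
    then show "y \<in> N x" unfolding N_def using i(1) by blast
  qed
  have "\<exists>s' t'. 0 < s' \<and> 0 < t' \<and> s' + t' \<le> (r+1)*(s+t) \<and> \<not> has_bip_hole V (E - ?H) s' t'"
  proof (cases "s \<le> t")
    case True
    have "\<not> has_bip_hole V (E - ?H) s (t + 2*r*s)" by (rule key[OF st(4) st(1,2) Nc NH])
    moreover have "r*s \<le> r*t" using True by simp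
    then have h:  "s + (t + 2*r*s) \<le> (r+1)*(s+t)" by (simp add: algebra_simps)
    ultimately show ?thesis using st h by blast
  next
    case False
    have "\<not> has_bip_hole V E t s" using st(4) hole_sym by blast
    then have "\<not> has_bip_hole V (E - ?H) t (s + 2*r*t)" by (rule key[OF _ st(2,1) Nc NH])
    then have "\<not> has_bip_hole V (E - ?H) (s + 2*r*t) t" using hole_sym by blast
    moreover have "r*t \<le> r*s" using False by simp
    then have h:  "(s + 2*r*t) + t \<le> (r+1)*(s+t)" by (simp add: algebra_simps)
    ultimately show ?thesis using st h by blast
  qed
  then obtain s' t' where s't': "0 < s'" "0 < t'" "s' + t' \<le> (r+1)*(s+t)"
    "\<not> has_bip_hole V (E - ?H) s' t'" by blast
  then have "?P (E - ?H) (s' + t' - 1)" by (intro exI[of _ s'] exI[of _ t']) simp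
  then have "bhn V (E - ?H) \<le> s' + t' - 1" unfolding bhn_def by (rule Least_le)
  then show ?thesis using s't' st by simp
qed

end
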